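(* There exist continuous functions $f_1,f_2,f_3,f_4:\mathrm{SO}(3)\to\mathbb{R}^3$ such that for every rotation $R\in\mathrm{SO}(3)$, at least one of $\mathbf{R}_{xyz}(f_1(R))$, $\mathbf{R}_{xyz}(f_2(R))$, $\mathbf{R}_{xzy}(f_3(R))$, $\mathbf{R}_{xzy}(f_4(R))$ is equal to $R$.
   Context: Unit quaternions $w+x\mathbf{i}+y\mathbf{j}+z\mathbf{k}$ are identified with $(w,x,y,z)\in S^3$, and $\mathbf{R}_Q:S^3\to\mathrm{SO}(3)$ is $$\mathbf{R}_Q(w,x,y,z)=\begin{bmatrix}1-2y^2-2z^2 & 2(xy-zw) & 2(xz+yw)\\ 2(xy+zw) & 1-2x^2-2z^2 & 2(yz-xw)\\ 2(xz-yw) & 2(yz+xw) & 1-2x^2-2y^2\end{bmatrix}.$$ $\mathbf{R}_{xyz}(\alpha,\beta,\gamma)=\mathbf{R}_Q\big((\cos\frac{\gamma}{2}+\mathbf{k}\sin\frac{\gamma}{2})(\cos\frac{\beta}{2}+\mathbf{j}\sin\frac{\beta}{2})(\cos\frac{\alpha}{2}+\mathbf{i}\sin\frac{\alpha}{2})\big)$ and $\mathbf{R}_{xzy}(\alpha,\beta,\gamma)=\mathbf{R}_Q\big((\cos\frac{\gamma}{2}+\mathbf{j}\sin\frac{\gamma}{2})(\cos\frac{\beta}{2}+\mathbf{k}\sin\frac{\beta}{2})(\cos\frac{\alpha}{2}+\mathbf{i}\sin\frac{\alpha}{2})\big)$ (quaternion products) are the rotations given by extrinsic $x$-$y$-$z$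 and $x$-$z$-$y$ Euler angles respectively. *)

theory Defs
  imports "HOL-Analysis.Analysis"
begin

text \<open>Quaternions w + x i + y j + z k represented as 4-tuples (w,x,y,z) of reals.\<close>
type_synonym quat = "real \<times> real \<times> real \<times> real"

fun qmult :: "quat \<Rightarrow> quat \<Rightarrow> quat" where
  "qmult (a1, b1, c1, d1) (a2, b2, c2, d2) =
     (a1*a2 - b1*b2 - c1*c2 - d1*d2,
      a1*b2 + b1*a2 + c1*d2 - d1*c2,
      a1*c2 - b1*d2 + c1*a2 + d1*b2,
      a1*d2 + b1*c2 - c1*b2 + d1*a2)"

definition RQ :: "quat \<Rightarrow> real^3^3" where
  "RQ q = (case q of (w, x, y, z) \<Rightarrow>
     vector [vector [1 - 2*y^2 - 2*z^2, 2*(x*y - z*w), 2*(x*z + y*w)],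
             vector [2*(x*y + z*w), 1 - 2*x^2 - 2*z^2, 2*(y*z - x*w)],
             vector [2*(x*z - y*w), 2*(y*z + x*w), 1 - 2*x^2 - 2*y^2]])"

definition qi :: "real \<Rightarrow> quat" where "qi t = (cos (t/2), sin (t/2), 0, 0)"
definition qj :: "real \<Rightarrow> quat" where "qj t = (cos (t/2), 0, sin (t/2), 0)"
definition qk :: "real \<Rightarrow> quat" where "qk t = (cos (t/2), 0, 0, sin (t/2))"

text \<open>Euler angle rotations; the argument vector is (alpha, beta, gamma).\<close>
definition Rxyz :: "real^3 \<Rightarrow> real^3^3" where
  "Rxyz v = RQ (qmult (qmult (qk (v$3)) (qj (v$2))) (qi (v$1)))"

definition Rxzy :: "real^3 \<Rightarrow> real^3^3" where
  "Rxzy v = RQ (qmult (qmult (qj (v$3)) (qk (v$2))) (qi (v$1)))"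

definition SO3 :: "(real^3^3) set" where
  "SO3 = {R. orthogonal_matrix R \<and> det R = 1}"

end

theory Submission
  imports Defs
begin

lemma RQ_nth: "RQ (w,x,y,z) $ i $ j =
  (if i = 1 then (if j = 1 then 1 - 2*y^2 - 2*z^2 else if j = 2 then 2*(x*y - z*w) else 2*(x*z + y*w))
   else if i = 2 then (if j = 1 then 2*(x*y + z*w) else if j = 2 then 1 - 2*x^2 - 2*z^2 else 2*(y*z - x*w))
   else (if j = 1 then 2*(x*z - y*w) else if j = 2 then 2*(y*z + x*w) else 1 - 2*x^2 - 2*y^2))"
  using exhaust_3[of i] exhaust_3[of j] by (auto simp: RQ_def)

lemma half_trig: fixes t :: real shows "cos t = 1 - 2 * sin (t/2)^2" "sin t = 2 * sin (t/2) * cos (t/2)" "sin (t/2)^2 + cos (t/2)^2 = 1"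
proof -
  have e: "t = 2 * (t/2)" by simp
  show "cos t = 1 - 2 * sin (t/2)^2" by (subst e, subst cos_double_sin) simp
  show "sin t = 2 * sin (t/2) * cos (t/2)" by (subst e, subst sin_double) simp
  show "sin (t/2)^2 + cos (t/2)^2 = 1" by simp
qed

lemma Rxyz_nth:
  fixes v :: "real^3"
  defines "a \<equiv> v$1" and "b \<equiv> v$2" and "g \<equiv> v$3"
  shows "Rxyz v $1$1 = cos g * cos b"
    "Rxyz v $1$2 = cos g * sin b * sin a - sin g * cos a"
    "Rxyz v $1$3 = cos g * sin b * cos a + sin g * sin a"
    "Rxyz v $2$1 = sin g * cos b"
    "Rxyz v $2$2 = sin g * sin b * sin a + cos g * cos a"
    "Rxyz v $2$3 = sin g * sin b * cos a - cos g * sin a"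
    "Rxyz v $3$1 = - sin b"
    "Rxyz v $3$2 = cos b * sin a"
    "Rxyz v $3$3 = cos b * cos a"
  unfolding Rxyz_def qi_def qj_def qk_def a_def b_def g_def
  using half_trig[of "v$1"] half_trig[of "v$2"] half_trig[of "v$3"]
  by (simp_all add: RQ_nth; algebra)+

lemma Rxzy_nth:
  fixes v :: "real^3"
  defines "a \<equiv> v$1" and "b \<equiv> v$2" and "g \<equiv> v$3"
  shows "Rxzy v $1$1 = cos g * cos b"
    "Rxzy v $1$2 = - cos g * sin b * cos a + sin g * sin a"
    "Rxzy v $1$3 = cos g * sin b * sin a + sin g * cos a"
    "Rxzy v $2$1 = sin b"
    "Rxzy v $2$2 = cos b * cos a"
    "Rxzy v $2$3 = - cos b * sin a"
    "Rxzy v $3$1 = - sin g * cos b"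
    "Rxzy v $3$2 = sin g * sin b * cos a + cos g * sin a"
    "Rxzy v $3$3 = - sin g * sin b * sin a + cos g * cos a"
  unfolding Rxzy_def qi_def qj_def qk_def a_def b_def g_def
  using half_trig[of "v$1"] half_trig[of "v$2"] half_trig[of "v$3"]
  by (simp_all add: RQ_nth; algebra)+

lemma cof_aux:
  fixes a11 a12 a13 a21 a22 a23 a31 a32 a33 :: real
  assumes n1: "a11^2 + a21^2 + a31^2 = 1" and n2: "a12^2 + a22^2 + a32^2 = 1"
    and n3: "a13^2 + a23^2 + a33^2 = 1" and d12: "a11*a12 + a21*a22 + a31*a32 = 0"
    and det: "a11*a22*a33 + a12*a23*a31 + a13*a21*a32 - a11*a23*a32 - a12*a21*a33 - a13*a22*a31 = 1"
  shows "a13 = a21*a32 - a31*a22 \<and> a23 = a31*a12 - a11*a32 \<and> a33 = a11*a22 - a21*a12"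
proof -
  have "(a13 - (a21*a32 - a31*a22))^2 + (a23 - (a31*a12 - a11*a32))^2 + (a33 - (a11*a22 - a21*a12))^2
     = (a13^2 + a23^2 + a33^2) - 2*(a11*a22*a33 + a12*a23*a31 + a13*a21*a32 - a11*a23*a32 - a12*a21*a33 - a13*a22*a31)
       + (a11^2 + a21^2 + a31^2)*(a12^2 + a22^2 + a32^2) - (a11*a12 + a21*a22 + a31*a32)^2"
    by algebra
  also have "\<dots> = 0" using n1 n2 n3 d12 det by simp
  finally show ?thesis by (simp add: sum_squares_eq_zero_iff add_nonneg_eq_0_iff)
qed

lemma SO3_facts:
  assumes "R \<in> SO3"
  shows "(R$1$1)^2 + (R$2$1)^2 + (R$3$1)^2 = 1"
    "(R$1$2)^2 + (R$2$2)^2 + (R$3$2)^2 = 1"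
    "(R$1$3)^2 + (R$2$3)^2 + (R$3$3)^2 = 1"
    "R$1$1*R$1$2 + R$2$1*R$2$2 + R$3$1*R$3$2 = 0"
    "R$1$1*R$1$3 + R$2$1*R$2$3 + R$3$1*R$3$3 = 0"
    "R$1$2*R$1$3 + R$2$2*R$2$3 + R$3$2*R$3$3 = 0"
    "(R$1$1)^2 + (R$1$2)^2 + (R$1$3)^2 = 1"
    "(R$2$1)^2 + (R$2$2)^2 + (R$2$3)^2 = 1"
    "(R$3$1)^2 + (R$3$2)^2 + (R$3$3)^2 = 1"
    "R$1$3 = R$2$1*R$3$2 - R$3$1*R$2$2"
    "R$2$3 = R$3$1*R$1$2 - R$1$1*R$3$2"
    "R$3$3 = R$1$1*R$2$2 - R$2$1*R$1$2"
    "R$1$2 = R$2$3*R$3$1 - R$3$3*R$2$1"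
    "R$2$2 = R$3$3*R$1$1 - R$1$3*R$3$1"
    "R$3$2 = R$1$3*R$2$1 - R$2$3*R$1$1"
    "R$1$1 = R$2$2*R$3$3 - R$3$2*R$2$3"
    "R$2$1 = R$3$2*R$1$3 - R$1$2*R$3$3"
    "R$3$1 = R$1$2*R$2$3 - R$2$2*R$1$3"
proof -
  have o: "transpose R ** R = mat 1" "R ** transpose R = mat 1" and d: "det R = 1"
    using assms by (auto simp: SO3_def orthogonal_matrix_def)
  have tt: "\<And>i j. (transpose R ** R)$i$j = (mat 1 :: real^3^3)$i$j"
      "\<And>i j. (R ** transpose R)$i$j = (mat 1 :: real^3^3)$i$j" using o by simp_all
  note c = tt[unfolded matrix_matrix_mult_def transpose_def mat_def, simplified, unfolded sum_3]
  show n1: "(R$1$1)^2 + (R$2$1)^2 + (R$3$1)^2 = 1" using c(1)[of 1 1] by (simp add: power2_eq_square)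
  show n2: "(R$1$2)^2 + (R$2$2)^2 + (R$3$2)^2 = 1" using c(1)[of 2 2] by (simp add: power2_eq_square)
  show n3: "(R$1$3)^2 + (R$2$3)^2 + (R$3$3)^2 = 1" using c(1)[of 3 3] by (simp add: power2_eq_square)
  show d12: "R$1$1*R$1$2 + R$2$1*R$2$2 + R$3$1*R$3$2 = 0" using c(1)[of 1 2] by simp
  show d13: "R$1$1*R$1$3 + R$2$1*R$2$3 + R$3$1*R$3$3 = 0" using c(1)[of 1 3] by simp
  show d23: "R$1$2*R$1$3 + R$2$2*R$2$3 + R$3$2*R$3$3 = 0" using c(1)[of 2 3] by simp
  show "(R$1$1)^2 + (R$1$2)^2 + (R$1$3)^2 = 1" using c(2)[of 1 1] by (simp add: power2_eq_square)
  show "(R$2$1)^2 + (R$2$2)^2 + (R$2$3)^2 = 1" using c(2)[of 2 2] by (simp add: power2_eq_square)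
  show "(R$3$1)^2 + (R$3$2)^2 + (R$3$3)^2 = 1" using c(2)[of 3 3] by (simp add: power2_eq_square)
  have dd: "R$1$1*R$2$2*R$3$3 + R$1$2*R$2$3*R$3$1 + R$1$3*R$2$1*R$3$2 - R$1$1*R$2$3*R$3$2 - R$1$2*R$2$1*R$3$3 - R$1$3*R$2$2*R$3$1 = 1"
    using d by (simp add: det_3)
  have cc: "R$1$3 = R$2$1*R$3$2 - R$3$1*R$2$2 \<and> R$2$3 = R$3$1*R$1$2 - R$1$1*R$3$2 \<and> R$3$3 = R$1$1*R$2$2 - R$2$1*R$1$2"
    by (rule cof_aux[OF n1 n2 n3 d12 dd])
  then show "R$1$3 = R$2$1*R$3$2 - R$3$1*R$2$2"
    "R$2$3 = R$3$1*R$1$2 - R$1$1*R$3$2"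
    "R$3$3 = R$1$1*R$2$2 - R$2$1*R$1$2" by auto
  show "R$1$2 = R$2$3*R$3$1 - R$3$3*R$2$1"
    "R$2$2 = R$3$3*R$1$1 - R$1$3*R$3$1"
    "R$3$2 = R$1$3*R$2$1 - R$2$3*R$1$1"
    "R$1$1 = R$2$2*R$3$3 - R$3$2*R$2$3"
    "R$2$1 = R$3$2*R$1$3 - R$1$2*R$3$3"
    "R$3$1 = R$1$2*R$2$3 - R$2$2*R$1$3"
    using cc n1 n2 n3 d12 d13 d23 by algebra+
qed

lemma lin_uniq:
  fixes a b x y x' y' :: real
  assumes "a^2 + b^2 \<noteq> 0" "a*x + b*y = p" "a*y - b*x = q" "a*x' + b*y' = p" "a*y' - b*x' = q"
  shows "x = x' \<and> y = y'"
proof -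
  have e1: "\<And>x y. (a^2+b^2) * x = a*(a*x+b*y) - b*(a*y-b*x)" "\<And>x y. (a^2+b^2) * y = b*(a*x+b*y) + a*(a*y-b*x)"
    by (simp_all add: algebra_simps power2_eq_square)
  have "(a^2+b^2) * x = (a^2+b^2) * x'" using e1(1)[of x y] e1(1)[of x' y'] assms(2-5) by simp
  moreover have "(a^2+b^2) * y = (a^2+b^2) * y'" using e1(2)[where x=x and y=y] e1(2)[where x=x' and y=y'] assms(2-5) by simp
  ultimately show ?thesis using assms(1) by auto
qed

lemma sq_ne0: "cos (b::real) \<noteq> 0 \<Longrightarrow> (cos b * cos g)^2 + (cos b * sin g)^2 \<noteq> 0"
proof -
  assume "cos b \<noteq> 0"
  have "(cos b * cos g)^2 + (cos b * sin g)^2 = (cos b)^2 * ((sin g)^2 + (cos g)^2)" by algebra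
  then show ?thesis using \<open>cos b \<noteq> 0\<close> by simp
qed

lemma xyz_valid:
  assumes R: "R \<in> SO3" and cb: "cos b \<noteq> 0" and sb: "sin b = - R$3$1"
    and h1: "cos b * cos a = R$3$3" and h2: "cos b * sin a = R$3$2"
    and h3: "cos b * cos g = R$1$1" and h4: "cos b * sin g = R$2$1"
  shows "Rxyz (vector [a, b, g]) = R"
proof -
  let ?M = "Rxyz (vector [a, b, g])"
  note M = Rxyz_nth[of "vector [a,b,g]", simplified]
  note F = SO3_facts[OF R]
  have nz: "(R$1$1)^2 + (R$2$1)^2 \<noteq> 0" using sq_ne0[OF cb, of g] h3 h4 by simp
  have p1: "R$1$2 = ?M$1$2 \<and> R$2$2 = ?M$2$2"
  proof (rule lin_uniq[OF nz])
    show "R$1$1 * R$1$2 + R$2$1 * R$2$2 = - R$3$1 * R$3$2" using F(4) by algebra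
    show "R$1$1 * R$2$2 - R$2$1 * R$1$2 = R$3$3" using F(12) by algebra
    show "R$1$1 * ?M$1$2 + R$2$1 * ?M$2$2 = - R$3$1 * R$3$2"
      unfolding M h3[symmetric] h4[symmetric] h2[symmetric] sb[symmetric]
      using sin_cos_squared_add[of g] by algebra
    show "R$1$1 * ?M$2$2 - R$2$1 * ?M$1$2 = R$3$3"
      unfolding M h3[symmetric] h4[symmetric] h1[symmetric]
      using sin_cos_squared_add[of g] sin_cos_squared_add[of b] by algebra
  qed
  have p2: "R$1$3 = ?M$1$3 \<and> R$2$3 = ?M$2$3"
  proof (rule lin_uniq[OF nz])
    show "R$1$1 * R$1$3 + R$2$1 * R$2$3 = - R$3$1 * R$3$3" using F(5) by algebra
    show "R$1$1 * R$2$3 - R$2$1 * R$1$3 = - R$3$2" using F(15) by algebra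
    show "R$1$1 * ?M$1$3 + R$2$1 * ?M$2$3 = - R$3$1 * R$3$3"
      unfolding M h3[symmetric] h4[symmetric] h1[symmetric] sb[symmetric]
      using sin_cos_squared_add[of g] by algebra
    show "R$1$1 * ?M$2$3 - R$2$1 * ?M$1$3 = - R$3$2"
      unfolding M h3[symmetric] h4[symmetric] h2[symmetric]
      using sin_cos_squared_add[of g] sin_cos_squared_add[of b] by algebra
  qed
  show ?thesis
    unfolding vec_eq_iff forall_3
    using p1 p2 h1 h2 h3 h4 sb by (simp add: M mult.commute)
qed

lemma xzy_valid:
  assumes R: "R \<in> SO3" and cb: "cos b \<noteq> 0" and sb: "sin b = R$2$1"
    and h1: "cos b * cos a = R$2$2" and h2: "cos b * sin a = - R$2$3"
    and h3: "cos b * cos g = R$1$1" and h4: "cos b * sin g = - R$3$1"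
  shows "Rxzy (vector [a, b, g]) = R"
proof -
  let ?M = "Rxzy (vector [a, b, g])"
  note M = Rxzy_nth[of "vector [a,b,g]", simplified]
  note F = SO3_facts[OF R]
  have h4': "R$3$1 = - (cos b * sin g)" using h4 by simp
  have h2': "R$2$3 = - (cos b * sin a)" using h2 by simp
  have nz: "(R$1$1)^2 + (R$3$1)^2 \<noteq> 0" using sq_ne0[OF cb, of g] h3 h4 by simp
  have p1: "R$1$2 = ?M$1$2 \<and> R$3$2 = ?M$3$2"
  proof (rule lin_uniq[OF nz])
    show "R$1$1 * R$1$2 + R$3$1 * R$3$2 = - R$2$1 * R$2$2" using F(4) by algebra
    show "R$1$1 * R$3$2 - R$3$1 * R$1$2 = - R$2$3" using F(11) by algebra
    show "R$1$1 * ?M$1$2 + R$3$1 * ?M$3$2 = - R$2$1 * R$2$2"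
      unfolding M h3[symmetric] h4' h1[symmetric] sb[symmetric]
      using sin_cos_squared_add[of g] by algebra
    show "R$1$1 * ?M$3$2 - R$3$1 * ?M$1$2 = - R$2$3"
      unfolding M h3[symmetric] h4' h2'
      using sin_cos_squared_add[of g] sin_cos_squared_add[of b] by algebra
  qed
  have p2: "R$1$3 = ?M$1$3 \<and> R$3$3 = ?M$3$3"
  proof (rule lin_uniq[OF nz])
    show "R$1$1 * R$1$3 + R$3$1 * R$3$3 = - R$2$1 * R$2$3" using F(5) by algebra
    show "R$1$1 * R$3$3 - R$3$1 * R$1$3 = R$2$2" using F(14) by algebra
    show "R$1$1 * ?M$1$3 + R$3$1 * ?M$3$3 = - R$2$1 * R$2$3"
      unfolding M h3[symmetric] h4' h2' sb[symmetric]
      using sin_cos_squared_add[of g] by algebra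
    show "R$1$1 * ?M$3$3 - R$3$1 * ?M$1$3 = R$2$2"
      unfolding M h3[symmetric] h4' h1[symmetric]
      using sin_cos_squared_add[of g] sin_cos_squared_add[of b] by algebra
  qed
  show ?thesis
    unfolding vec_eq_iff forall_3
    using p1 p2 h1 h2 h3 h4 sb by (simp add: M mult.commute)
qed

lemma sq_lt: fixes x a :: real shows "\<bar>x\<bar> < a \<Longrightarrow> x^2 < a^2"
  by (metis abs_ge_zero abs_of_nonneg order_le_less_trans power2_abs power_strict_mono zero_less_two dual_order.strict_implies_order pos2 less_le_trans abs_less_iff) 
lemma sq_lt_abs: fixes x a :: real shows "x^2 < a^2 \<Longrightarrow> 0 \<le> a \<Longrightarrow> \<bar>x\<bar> < a"
  by (metis abs_of_nonneg power2_abs power_less_imp_less_base)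
lemma sq_le_abs: fixes x a :: real shows "x^2 \<le> a^2 \<Longrightarrow> 0 \<le> a \<Longrightarrow> \<bar>x\<bar> \<le> a"
  by (metis abs_of_nonneg power2_abs power2_le_imp_le)
lemma abs_le_sq: fixes x a :: real shows "a \<le> \<bar>x\<bar> \<Longrightarrow> 0 \<le> a \<Longrightarrow> a^2 \<le> x^2"
  by (metis power2_abs power_mono)

lemma prod_small: fixes x y a :: real shows "\<bar>x\<bar> < a \<Longrightarrow> \<bar>y\<bar> \<le> 1 \<Longrightarrow> \<bar>x*y\<bar> < a"
proof -
  assume "\<bar>x\<bar> < a" "\<bar>y\<bar> \<le> 1"
  then have "\<bar>x\<bar> * \<bar>y\<bar> \<le> \<bar>x\<bar>" by (simp add: mult_left_le)
  then show ?thesis using \<open>\<bar>x\<bar> < a\<close> by (simp add: abs_mult)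
qed

lemma unit_bound: fixes x y z :: real shows "x^2 + y^2 + z^2 = 1 \<Longrightarrow> \<bar>y\<bar> \<le> 1"
proof -
  assume "x^2 + y^2 + z^2 = 1"
  then have "y^2 \<le> 1" using zero_le_power2[of x] zero_le_power2[of z] by linarith
  then show ?thesis using sq_le_abs[of y 1] by simp
qed

lemma cover_real:
  fixes r11 r12 r13 r21 r22 r23 r31 r32 r33 :: real
  assumes c1: "r11^2 + r21^2 + r31^2 = 1" and w2: "r21^2 + r22^2 + r23^2 = 1"
    and w3: "r31^2 + r32^2 + r33^2 = 1" and w1: "r11^2 + r12^2 + r13^2 = 1"
    and f12: "r33 = r11*r22 - r21*r12" and f16: "r11 = r22*r33 - r32*r23"
  shows "((r11 \<ge> 1/20 \<or> \<bar>r21\<bar> \<ge> 1/20) \<and> (r33 \<ge> 1/20 \<or> \<bar>r32\<bar> \<ge> 1/20))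
       \<or> ((r11 \<le> -1/20 \<or> \<bar>r21\<bar> \<ge> 1/20) \<and> (r33 \<le> -1/20 \<or> \<bar>r32\<bar> \<ge> 1/20))
       \<or> (\<bar>r21\<bar> \<le> 1/2 \<and> r11 \<ge> -1/2 \<and> (r22 \<le> -1/20 \<or> \<bar>r23\<bar> \<ge> 1/20))
       \<or> (\<bar>r21\<bar> \<le> 1/2 \<and> r22 \<ge> 1/2 \<and> \<bar>r31\<bar> \<ge> 1/2)
       \<or> (\<bar>r21\<bar> \<le> 1/2 \<and> r22 \<le> -1/4 \<and> r11 \<le> -1/2)"
proof (rule ccontr)
  assume H: "\<not> ?thesis"
  have nA: "\<not> ((r11 \<ge> 1/20 \<or> \<bar>r21\<bar> \<ge> 1/20) \<and> (r33 \<ge> 1/20 \<or> \<bar>r32\<bar> \<ge> 1/20))"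
   and nB: "\<not> ((r11 \<le> -1/20 \<or> \<bar>r21\<bar> \<ge> 1/20) \<and> (r33 \<le> -1/20 \<or> \<bar>r32\<bar> \<ge> 1/20))"
   and nC: "\<not> (\<bar>r21\<bar> \<le> 1/2 \<and> r11 \<ge> -1/2 \<and> (r22 \<le> -1/20 \<or> \<bar>r23\<bar> \<ge> 1/20))"
   and nD: "\<not> (\<bar>r21\<bar> \<le> 1/2 \<and> r22 \<ge> 1/2 \<and> \<bar>r31\<bar> \<ge> 1/2)"
   and nE: "\<not> (\<bar>r21\<bar> \<le> 1/2 \<and> r22 \<le> -1/4 \<and> r11 \<le> -1/2)"
    using H by blast+
  have nA': "(r11 < 1/20 \<and> \<bar>r21\<bar> < 1/20) \<or> (r33 < 1/20 \<and> \<bar>r32\<bar> < 1/20)"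
    using nA by (auto simp: not_le)
  have nB': "(r11 > -1/20 \<and> \<bar>r21\<bar> < 1/20) \<or> (r33 > -1/20 \<and> \<bar>r32\<bar> < 1/20)"
    using nB by (auto simp: not_le)
  have b12: "\<bar>r12\<bar> \<le> 1" using unit_bound[of r11 r12 r13] w1 by simp
  have b22: "\<bar>r22\<bar> \<le> 1" using unit_bound[of r21 r22 r23] w2 by simp
  have b23: "\<bar>r23\<bar> \<le> 1" using unit_bound[of r22 r23 r21] w2 by (simp add: algebra_simps)
  have b33: "\<bar>r33\<bar> \<le> 1" using unit_bound[of r31 r33 r32] w3 by (simp add: algebra_simps)
  have eqn: "r32^2 + r33^2 = r11^2 + r21^2" using c1 w3 by simp
  have L: "\<bar>r21\<bar> < 1/10 \<and> \<bar>r32\<bar> < 1/10 \<and> ((r11 < 1/10 \<and> r33 > -1/10) \<or> (r11 > -1/10 \<and> r33 < 1/10))"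
    using nA' nB'
  proof (elim disjE conjE)
    assume a: "r11 < 1/20" "\<bar>r21\<bar> < 1/20" "r11 > -1/20"
    then have "\<bar>r11\<bar> < 1/20" by linarith
    then have "r11^2 < (1/20)^2" "r21^2 < (1/20)^2" using a by (simp_all add: sq_lt)
    then have "r32^2 + r33^2 < (1/10)^2" using eqn by (simp add: power_divide)
    then have "r32^2 < (1/10)^2" "r33^2 < (1/10)^2" using zero_le_power2[of r32] zero_le_power2[of r33] by linarith+
    then have "\<bar>r32\<bar> < 1/10" "\<bar>r33\<bar> < 1/10" using sq_lt_abs[of _ "1/10"] by auto
    then show ?thesis using a by linarith
  next
    assume a: "r33 < 1/20" "\<bar>r32\<bar> < 1/20" "r33 > -1/20"
    then have "\<bar>r33\<bar> < 1/20" by linarith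
    then have "r33^2 < (1/20)^2" "r32^2 < (1/20)^2" using a by (simp_all add: sq_lt)
    then have "r11^2 + r21^2 < (1/10)^2" using eqn by (simp add: power_divide)
    then have "r11^2 < (1/10)^2" "r21^2 < (1/10)^2" using zero_le_power2[of r11] zero_le_power2[of r21] by linarith+
    then have "\<bar>r11\<bar> < 1/10" "\<bar>r21\<bar> < 1/10" using sq_lt_abs[of _ "1/10"] by auto
    then show ?thesis using a by linarith
  qed linarith+
  have r21h: "\<bar>r21\<bar> \<le> 1/2" using L by linarith
  show False
  proof (cases "r11 \<le> -1/2")
    case True
    then have r33: "r33 > -1/10" using L by linarith
    have "\<bar>r32*r23\<bar> < 1/10" using prod_small L b23 by blast
    then have p: "r22*r33 < -2/5" using f16 True by linarith
    have "r22 \<le> -1/4"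
    proof (rule ccontr)
      assume "\<not> r22 \<le> -1/4"
      show False
      proof (cases "r33 \<ge> 0")
        case True
        have "r22*r33 \<ge> (-1/4)*r33" using \<open>\<not> r22 \<le> -1/4\<close> True by (intro mult_right_mono) auto
        then show False using p b33 True by linarith
      next
        case False
        have "\<bar>r22*r33\<bar> < 1/10" using prod_small[of r33 "1/10" r22] False r33 b22 by (simp add: mult.commute)
        then show False using p by linarith
      qed
    qed
    then show False using nE True r21h by blast
  next
    case False
    then have r2: "r22 > -1/20" "\<bar>r23\<bar> < 1/20" using nC r21h by (auto simp: not_le)
    have "r21^2 < (1/10)^2" "r23^2 < (1/20)^2" using L r2 by (simp_all add: sq_lt)
    then have r22sq: "r22^2 > (49/50)^2" using w2 by (simp add: power_divide)
    have r22: "r22 > 49/50"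
    proof (rule ccontr)
      assume n: "\<not> r22 > 49/50"
      show False
      proof (cases "r22 \<ge> 0")
        case True
        then have "r22^2 \<le> (49/50)^2" using n by (intro power_mono) auto
        then show False using r22sq by linarith
      next
        case False
        then have "\<bar>r22\<bar> < 1/20" using r2 by linarith
        then have "r22^2 < (1/20)^2" by (simp add: sq_lt)
        then show False using r22sq by (simp add: power_divide)
      qed
    qed
    have "\<bar>r21*r12\<bar> < 1/10" using prod_small L b12 by blast
    then have A: "\<bar>r11*r22 - r33\<bar> < 1/10" using f12 by linarith
    have "\<bar>r11\<bar> < 21/100"
    proof (rule ccontr)
      assume "\<not> \<bar>r11\<bar> < 21/100"
      then consider "r11 \<ge> 21/100" | "r11 \<le> -21/100" by linarith
      then show False
      proof cases
        case 1
        have "r11*r22 \<ge> 21/100 * (49/50)" using 1 r22 by (intro mult_mono) auto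
        then show False using A L 1 by linarith
      next
        case 2
        have "(-r11)*r22 \<ge> 21/100 * (49/50)" using 2 r22 by (intro mult_mono) auto
        then show False using A L 2 by linarith
      qed
    qed
    then have "r11^2 < (21/100)^2" by (simp add: sq_lt)
    then have "r31^2 \<ge> (1/2)^2" using c1 \<open>r21^2 < (1/10)^2\<close> by (simp add: power_divide)
    have "\<bar>r31\<bar> \<ge> 1/2"
    proof (rule ccontr)
      assume "\<not> \<bar>r31\<bar> \<ge> 1/2"
      then have "r31^2 < (1/2)^2" by (simp add: sq_lt)
      then show False using \<open>r31^2 \<ge> (1/2)^2\<close> by linarith
    qed
    then show False using nD r21h r22 by auto
  qed
qed

lemma arg_pos:
  assumes "Complex a b \<noteq> 0"
  shows "cmod (Complex a b) * cos (Arg (Complex a b)) = a" "cmod (Complex a b) * sin (Arg (Complex a b)) = b"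
  using assms by (simp_all add: cos_Arg sin_Arg)

lemma arg_neg:
  assumes "Complex a b \<noteq> 0"
  shows "cmod (Complex a b) * cos (Arg (Complex (-a) (-b)) + pi) = a"
    "cmod (Complex a b) * sin (Arg (Complex (-a) (-b)) + pi) = b"
proof -
  have e: "Complex (-a) (-b) = - Complex a b" by (simp add: complex_eq_iff)
  have nz: "Complex (-a) (-b) \<noteq> 0" using assms e by simp
  have n: "cmod (Complex (-a) (-b)) = cmod (Complex a b)" using e by simp
  have c: "cmod (Complex a b) \<noteq> 0" using assms by (metis norm_eq_zero)
  have c1: "cos (Arg (Complex (-a) (-b))) = -a / cmod (Complex a b)" using cos_Arg[OF nz] n by simp
  have s1: "sin (Arg (Complex (-a) (-b))) = -b / cmod (Complex a b)" using sin_Arg[OF nz] n by simp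
  show "cmod (Complex a b) * cos (Arg (Complex (-a) (-b)) + pi) = a"
    using c c1 by (simp add: cos_periodic_pi)
  show "cmod (Complex a b) * sin (Arg (Complex (-a) (-b)) + pi) = b"
    using c s1 by (simp add: sin_periodic_pi)
qed

lemma xyz_chart:
  assumes R: "R \<in> SO3" and nz: "Complex (R$1$1) (R$2$1) \<noteq> 0"
    and h1: "cmod (Complex (R$3$3) (R$3$2)) * cos a = R$3$3"
    and h2: "cmod (Complex (R$3$3) (R$3$2)) * sin a = R$3$2"
    and h3: "cmod (Complex (R$1$1) (R$2$1)) * cos g = R$1$1"
    and h4: "cmod (Complex (R$1$1) (R$2$1)) * sin g = R$2$1"
  shows "Rxyz (vector [a, - arcsin (R$3$1), g]) = R"
proof -
  note F = SO3_facts[OF R]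
  have b: "\<bar>R$3$1\<bar> \<le> 1" using unit_bound[of "R$1$1" "R$3$1" "R$2$1"] F(1) by (simp add: algebra_simps)
  have cP: "cmod (Complex (R$1$1) (R$2$1)) = sqrt (1 - (R$3$1)^2)"
    using F(1) by (simp add: complex_norm algebra_simps)
  have cQ: "cmod (Complex (R$3$3) (R$3$2)) = sqrt (1 - (R$3$1)^2)"
    using F(9) by (simp add: complex_norm algebra_simps)
  have cb: "cos (- arcsin (R$3$1)) = sqrt (1 - (R$3$1)^2)" using b by (simp add: cos_arcsin)
  have sb: "sin (- arcsin (R$3$1)) = - R$3$1" using b by simp
  have pos: "sqrt (1 - (R$3$1)^2) \<noteq> 0" using nz cP by (metis norm_eq_zero)
  show ?thesis
    by (rule xyz_valid[OF R]) (use cb sb pos h1 h2 h3 h4 cP cQ in simp_all)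
qed

lemma xzy_chart:
  assumes R: "R \<in> SO3" and nz: "Complex (R$1$1) (- R$3$1) \<noteq> 0"
    and h1: "cmod (Complex (R$2$2) (- R$2$3)) * cos a = R$2$2"
    and h2: "cmod (Complex (R$2$2) (- R$2$3)) * sin a = - R$2$3"
    and h3: "cmod (Complex (R$1$1) (- R$3$1)) * cos g = R$1$1"
    and h4: "cmod (Complex (R$1$1) (- R$3$1)) * sin g = - R$3$1"
  shows "Rxzy (vector [a, arcsin (R$2$1), g]) = R"
proof -
  note F = SO3_facts[OF R]
  have b: "\<bar>R$2$1\<bar> \<le> 1" using unit_bound[of "R$1$1" "R$2$1" "R$3$1"] F(1) by (simp add: algebra_simps)
  have cP: "cmod (Complex (R$1$1) (- R$3$1)) = sqrt (1 - (R$2$1)^2)"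
    using F(1) by (simp add: complex_norm algebra_simps)
  have cQ: "cmod (Complex (R$2$2) (- R$2$3)) = sqrt (1 - (R$2$1)^2)"
    using F(8) by (simp add: complex_norm algebra_simps)
  have cb: "cos (arcsin (R$2$1)) = sqrt (1 - (R$2$1)^2)" using b by (simp add: cos_arcsin)
  have sb: "sin (arcsin (R$2$1)) = R$2$1" using b by simp
  have pos: "sqrt (1 - (R$2$1)^2) \<noteq> 0" using nz cP by (metis norm_eq_zero)
  show ?thesis
    by (rule xzy_valid[OF R]) (use cb sb pos h1 h2 h3 h4 cP cQ in simp_all)
qed

lemma cont_vec3:
  assumes "continuous_on S f" "continuous_on S g" "continuous_on S h"
  shows "continuous_on S (\<lambda>x. vector [f x, g x, h x] :: real^3)"
proof -
  have e: "(\<lambda>x. vector [f x, g x, h x] :: real^3) = (\<lambda>x. \<chi> i. if i = 1 then f x else if i = 2 then g x else h x)"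
    by (rule ext) (simp add: vec_eq_iff forall_3)
  show ?thesis unfolding e
  proof (intro continuous_on_vec_lambda)
    fix i :: 3
    show "continuous_on S (\<lambda>x. if i = 1 then f x else if i = 2 then g x else h x)"
      by (cases "i = 1"; cases "i = 2") (simp_all add: assms)
  qed
qed

lemma cont_Arg_pair:
  assumes "continuous_on S a" "continuous_on S b" "\<And>x. x \<in> S \<Longrightarrow> b x = 0 \<Longrightarrow> a x > 0"
  shows "continuous_on S (\<lambda>x. Arg (Complex (a x) (b x)))"
proof -
  have "continuous_on S (\<lambda>x. Arg (complex_of_real (a x) + \<i> * complex_of_real (b x)))"
    by (intro continuous_on_Arg' continuous_intros assms(1,2))
       (use assms(3) in \<open>fastforce simp: complex_nonpos_Reals_iff\<close>)
  then show ?thesis by (simp add: Complex_eq)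
qed

lemma cont_entry: "continuous_on S (\<lambda>R::real^3^3. R$i$j)"
  by (intro continuous_intros)

definition g1 :: "real^3^3 \<Rightarrow> real^3" where "g1 R = vector [Arg (Complex (R$3$3) (R$3$2)), - arcsin (R$3$1), Arg (Complex (R$1$1) (R$2$1))]"
definition g2 :: "real^3^3 \<Rightarrow> real^3" where "g2 R = vector [Arg (Complex (-R$3$3) (-R$3$2)) + pi, - arcsin (R$3$1), Arg (Complex (-R$1$1) (-R$2$1)) + pi]"
definition g3 :: "real^3^3 \<Rightarrow> real^3" where "g3 R = vector [Arg (Complex (-R$2$2) (-(-R$2$3))) + pi, arcsin (R$2$1), Arg (Complex (R$1$1) (- R$3$1))]"
definition g4a :: "real^3^3 \<Rightarrow> real^3" where "g4a R = vector [Arg (Complex (R$2$2) (- R$2$3)), arcsin (R$2$1), Arg (Complex (R$1$1) (- R$3$1))]"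
definition g4c :: "real^3^3 \<Rightarrow> real^3" where "g4c R = vector [Arg (Complex (-R$2$2) (-(-R$2$3))) + pi, arcsin (R$2$1), Arg (Complex (-R$1$1) (-(-R$3$1))) + pi]"
definition g4 :: "real^3^3 \<Rightarrow> real^3" where "g4 R = (if R$2$2 \<ge> 0 then g4a R else g4c R)"

definition "S1 = {R::real^3^3. \<bar>R$3$1\<bar> \<le> 1 \<and> (R$1$1 \<ge> 1/20 \<or> \<bar>R$2$1\<bar> \<ge> 1/20) \<and> (R$3$3 \<ge> 1/20 \<or> \<bar>R$3$2\<bar> \<ge> 1/20)}"
definition "S2 = {R::real^3^3. \<bar>R$3$1\<bar> \<le> 1 \<and> (R$1$1 \<le> -1/20 \<or> \<bar>R$2$1\<bar> \<ge> 1/20) \<and> (R$3$3 \<le> -1/20 \<or> \<bar>R$3$2\<bar> \<ge> 1/20)}"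
definition "S3 = {R::real^3^3. \<bar>R$2$1\<bar> \<le> 1/2 \<and> R$1$1 \<ge> -1/2 \<and> (R$2$2 \<le> -1/20 \<or> \<bar>R$2$3\<bar> \<ge> 1/20)}"
definition "S4a = {R::real^3^3. \<bar>R$2$1\<bar> \<le> 1/2 \<and> R$2$2 \<ge> 1/2 \<and> \<bar>R$3$1\<bar> \<ge> 1/2}"
definition "S4c = {R::real^3^3. \<bar>R$2$1\<bar> \<le> 1/2 \<and> R$2$2 \<le> -1/4 \<and> R$1$1 \<le> -1/2}"

lemma closed_S: "closed S1" "closed S2" "closed S3" "closed S4a" "closed S4c"
  unfolding S1_def S2_def S3_def S4a_def S4c_def
  by (intro closed_Collect_conj closed_Collect_disj closed_Collect_le continuous_intros)+

lemma cover: "R \<in> SO3 \<Longrightarrow> R \<in> S1 \<or> R \<in> S2 \<or> R \<in> S3 \<or> R \<in> S4a \<or> R \<in> S4c"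
proof -
  assume R: "R \<in> SO3"
  note F = SO3_facts[OF R]
  have b: "\<bar>R$3$1\<bar> \<le> 1" using unit_bound[of "R$1$1" "R$3$1" "R$2$1"] F(1) by (simp add: algebra_simps)
  from cover_real[OF F(1) F(8) F(9) F(7) F(12) F(16)] show ?thesis
  proof (elim disjE)
    assume h: "(R$1$1 \<ge> 1/20 \<or> \<bar>R$2$1\<bar> \<ge> 1/20) \<and> (R$3$3 \<ge> 1/20 \<or> \<bar>R$3$2\<bar> \<ge> 1/20)"
    have "R \<in> S1" unfolding S1_def mem_Collect_eq using h b by (intro conjI) blast+
    then show ?thesis by blast
  next
    assume h: "(R$1$1 \<le> -1/20 \<or> \<bar>R$2$1\<bar> \<ge> 1/20) \<and> (R$3$3 \<le> -1/20 \<or> \<bar>R$3$2\<bar> \<ge> 1/20)"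
    have "R \<in> S2" unfolding S2_def mem_Collect_eq using h b by (intro conjI) blast+
    then show ?thesis by blast
  next
    assume h: "\<bar>R$2$1\<bar> \<le> 1/2 \<and> R$1$1 \<ge> -1/2 \<and> (R$2$2 \<le> -1/20 \<or> \<bar>R$2$3\<bar> \<ge> 1/20)"
    have "R \<in> S3" unfolding S3_def mem_Collect_eq by (rule h)
    then show ?thesis by blast
  next
    assume h: "\<bar>R$2$1\<bar> \<le> 1/2 \<and> R$2$2 \<ge> 1/2 \<and> \<bar>R$3$1\<bar> \<ge> 1/2"
    have "R \<in> S4a" unfolding S4a_def mem_Collect_eq by (rule h)
    then show ?thesis by blast
  next
    assume h: "\<bar>R$2$1\<bar> \<le> 1/2 \<and> R$2$2 \<le> -1/4 \<and> R$1$1 \<le> -1/2"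
    have "R \<in> S4c" unfolding S4c_def mem_Collect_eq by (rule h)
    then show ?thesis by blast
  qed
qed

lemma extend:
  fixes g :: "real^3^3 \<Rightarrow> real^3"
  assumes "continuous_on (SO3 \<inter> S) g" "closed S"
  shows "\<exists>f. continuous_on SO3 f \<and> (\<forall>R\<in>SO3 \<inter> S. f R = g R)"
proof -
  obtain f where "continuous_on SO3 f" "\<And>x. x \<in> SO3 \<inter> S \<Longrightarrow> f x = g x"
    using Tietze_unbounded[OF assms(1) closedin_closed_Int[OF assms(2)]] by blast
  then show ?thesis by blast
qed

lemma cont1: "continuous_on (SO3 \<inter> S1) g1"
  unfolding g1_def
proof (rule cont_vec3)
  show "continuous_on (SO3 \<inter> S1) (\<lambda>R. Arg (Complex (R$3$3) (R$3$2)))"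
    by (rule cont_Arg_pair[OF cont_entry cont_entry]) (auto simp: S1_def)
  show "continuous_on (SO3 \<inter> S1) (\<lambda>R. - arcsin (R$3$1))"
    by (intro continuous_on_minus continuous_on_arcsin cont_entry) (auto simp: S1_def)
  show "continuous_on (SO3 \<inter> S1) (\<lambda>R. Arg (Complex (R$1$1) (R$2$1)))"
    by (rule cont_Arg_pair[OF cont_entry cont_entry]) (auto simp: S1_def)
qed

lemma cont2: "continuous_on (SO3 \<inter> S2) g2"
  unfolding g2_def
proof (rule cont_vec3)
  show "continuous_on (SO3 \<inter> S2) (\<lambda>R. Arg (Complex (-R$3$3) (-R$3$2)) + pi)"
    by (intro continuous_on_add continuous_on_const cont_Arg_pair continuous_on_minus cont_entry) (auto simp: S2_def)
  show "continuous_on (SO3 \<inter> S2) (\<lambda>R. - arcsin (R$3$1))"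
    by (intro continuous_on_minus continuous_on_arcsin cont_entry) (auto simp: S2_def)
  show "continuous_on (SO3 \<inter> S2) (\<lambda>R. Arg (Complex (-R$1$1) (-R$2$1)) + pi)"
    by (intro continuous_on_add continuous_on_const cont_Arg_pair continuous_on_minus cont_entry) (auto simp: S2_def)
qed


lemma S3_P: assumes "R \<in> SO3" "R \<in> S3" shows "R$1$1 > 0 \<or> R$3$1 \<noteq> 0"
proof (rule ccontr)
  assume n: "\<not> ?thesis"
  note F = SO3_facts[OF assms(1)]
  have h: "\<bar>R$2$1\<bar> \<le> 1/2" "R$1$1 \<ge> -1/2" using assms(2) by (auto simp: S3_def)
  have "(R$2$1)^2 \<le> (1/2)^2" using h(1) by (metis abs_le_sq abs_le_square_iff abs_of_nonneg zero_le_divide_1_iff zero_le_numeral abs_le_square_iff)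
  moreover have "(- R$1$1)^2 \<le> (1/2)^2" using h(2) n by (intro power_mono) auto
  ultimately show False using F(1) n by (simp add: power_divide)
qed

lemma cont3: "continuous_on (SO3 \<inter> S3) g3"
  unfolding g3_def
proof (rule cont_vec3)
  show "continuous_on (SO3 \<inter> S3) (\<lambda>R. Arg (Complex (-R$2$2) (-(-R$2$3))) + pi)"
    by (intro continuous_on_add continuous_on_const cont_Arg_pair continuous_on_minus cont_entry) (auto simp: S3_def)
  show "continuous_on (SO3 \<inter> S3) (\<lambda>R. arcsin (R$2$1))"
    by (intro continuous_on_arcsin cont_entry) (auto simp: S3_def)
  show "continuous_on (SO3 \<inter> S3) (\<lambda>R. Arg (Complex (R$1$1) (- R$3$1)))"
    by (intro cont_Arg_pair continuous_on_minus cont_entry) (auto dest: S3_P)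
qed

lemma cont4: "continuous_on (SO3 \<inter> (S4a \<union> S4c)) g4"
proof -
  have a: "continuous_on S4a g4a" unfolding g4a_def
  proof (rule cont_vec3)
    show "continuous_on S4a (\<lambda>R. Arg (Complex (R$2$2) (- R$2$3)))"
      by (intro cont_Arg_pair continuous_on_minus cont_entry) (auto simp: S4a_def)
    show "continuous_on S4a (\<lambda>R. arcsin (R$2$1))"
      by (intro continuous_on_arcsin cont_entry) (auto simp: S4a_def)
    show "continuous_on S4a (\<lambda>R. Arg (Complex (R$1$1) (- R$3$1)))"
      by (intro cont_Arg_pair continuous_on_minus cont_entry) (auto simp: S4a_def)
  qed
  have c: "continuous_on S4c g4c" unfolding g4c_def
  proof (rule cont_vec3)
    show "continuous_on S4c (\<lambda>R. Arg (Complex (-R$2$2) (-(-R$2$3))) + pi)"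
      by (intro continuous_on_add continuous_on_const cont_Arg_pair continuous_on_minus cont_entry) (auto simp: S4c_def)
    show "continuous_on S4c (\<lambda>R. arcsin (R$2$1))"
      by (intro continuous_on_arcsin cont_entry) (auto simp: S4c_def)
    show "continuous_on S4c (\<lambda>R. Arg (Complex (-R$1$1) (-(-R$3$1))) + pi)"
      by (intro continuous_on_add continuous_on_const cont_Arg_pair continuous_on_minus cont_entry) (auto simp: S4c_def)
  qed
  have "continuous_on (S4a \<union> S4c) g4"
  proof (rule continuous_on_closed_Un)
    show "continuous_on S4a g4" using a by (rule continuous_on_eq) (auto simp: g4_def S4a_def)
    show "continuous_on S4c g4" using c by (rule continuous_on_eq) (auto simp: g4_def S4c_def)
  qed (use closed_S in auto)
  then show ?thesis by (rule continuous_on_subset) auto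
qed

lemma nzC: "a \<noteq> 0 \<or> b \<noteq> 0 \<Longrightarrow> Complex a b \<noteq> 0"
  by (simp add: complex_eq_iff)

lemma valid1: assumes R: "R \<in> SO3" and S: "R \<in> S1" shows "Rxyz (g1 R) = R"
proof -
  have P: "Complex (R$1$1) (R$2$1) \<noteq> 0" and Q: "Complex (R$3$3) (R$3$2) \<noteq> 0"
    using S unfolding S1_def by (auto intro!: nzC)
  show ?thesis unfolding g1_def
    by (rule xyz_chart[OF R P arg_pos(1)[OF Q] arg_pos(2)[OF Q] arg_pos(1)[OF P] arg_pos(2)[OF P]])
qed

lemma valid2: assumes R: "R \<in> SO3" and S: "R \<in> S2" shows "Rxyz (g2 R) = R"
proof -
  have P: "Complex (R$1$1) (R$2$1) \<noteq> 0" and Q: "Complex (R$3$3) (R$3$2) \<noteq> 0"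
    using S unfolding S2_def by (auto intro!: nzC)
  show ?thesis unfolding g2_def
    by (rule xyz_chart[OF R P arg_neg(1)[OF Q] arg_neg(2)[OF Q] arg_neg(1)[OF P] arg_neg(2)[OF P]])
qed

lemma valid3: assumes R: "R \<in> SO3" and S: "R \<in> S3" shows "Rxzy (g3 R) = R"
proof -
  have P: "Complex (R$1$1) (- R$3$1) \<noteq> 0" using S3_P[OF R S] by (auto intro!: nzC)
  have Q: "Complex (R$2$2) (- R$2$3) \<noteq> 0"
    using S unfolding S3_def by (auto intro!: nzC)
  show ?thesis unfolding g3_def
    by (rule xzy_chart[OF R P arg_neg(1)[OF Q] arg_neg(2)[OF Q] arg_pos(1)[OF P] arg_pos(2)[OF P]])
qed

lemma valid4: assumes R: "R \<in> SO3" and S: "R \<in> S4a \<union> S4c" shows "Rxzy (g4 R) = R"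
proof (cases "R \<in> S4a")
  case True
  have P: "Complex (R$1$1) (- R$3$1) \<noteq> 0" and Q: "Complex (R$2$2) (- R$2$3) \<noteq> 0"
    using True unfolding S4a_def by (auto intro!: nzC)
  have e: "g4 R = g4a R" using True by (simp add: g4_def S4a_def)
  show ?thesis unfolding e g4a_def
    by (rule xzy_chart[OF R P arg_pos(1)[OF Q] arg_pos(2)[OF Q] arg_pos(1)[OF P] arg_pos(2)[OF P]])
next
  case False
  then have T: "R \<in> S4c" using S by blast
  have P: "Complex (R$1$1) (- R$3$1) \<noteq> 0" and Q: "Complex (R$2$2) (- R$2$3) \<noteq> 0"
    using T unfolding S4c_def by (auto intro!: nzC)
  have e: "g4 R = g4c R" using T by (simp add: g4_def S4c_def)
  show ?thesis unfolding e g4c_def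
    by (rule xzy_chart[OF R P arg_neg(1)[OF Q] arg_neg(2)[OF Q] arg_neg(1)[OF P] arg_neg(2)[OF P]])
qed

theorem theorem8:
  shows "\<exists>f1 f2 f3 f4 :: real^3^3 \<Rightarrow> real^3.
           continuous_on SO3 f1 \<and> continuous_on SO3 f2 \<and>
           continuous_on SO3 f3 \<and> continuous_on SO3 f4 \<and>
           (\<forall>R\<in>SO3. Rxyz (f1 R) = R \<or> Rxyz (f2 R) = R \<or>
                      Rxzy (f3 R) = R \<or> Rxzy (f4 R) = R)"
proof -
  obtain f1 where f1: "continuous_on SO3 f1" "\<forall>R\<in>SO3 \<inter> S1. f1 R = g1 R"
    using extend[OF cont1 closed_S(1)] by auto
  obtain f2 where f2: "continuous_on SO3 f2" "\<forall>R\<in>SO3 \<inter> S2. f2 R = g2 R"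
    using extend[OF cont2 closed_S(2)] by auto
  obtain f3 where f3: "continuous_on SO3 f3" "\<forall>R\<in>SO3 \<inter> S3. f3 R = g3 R"
    using extend[OF cont3 closed_S(3)] by blast
  have cl4: "closed (S4a \<union> S4c)" using closed_S by auto
  obtain f4 where f4: "continuous_on SO3 f4" "\<forall>R\<in>SO3 \<inter> (S4a \<union> S4c). f4 R = g4 R"
    using extend[OF cont4 cl4] by auto
  have "\<forall>R\<in>SO3. Rxyz (f1 R) = R \<or> Rxyz (f2 R) = R \<or> Rxzy (f3 R) = R \<or> Rxzy (f4 R) = R"
  proof
    fix R assume R: "R \<in> SO3"
    from cover[OF R] show "Rxyz (f1 R) = R \<or> Rxyz (f2 R) = R \<or> Rxzy (f3 R) = R \<or> Rxzy (f4 R) = R"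
      using valid1[OF R] valid2[OF R] valid3[OF R] valid4[OF R] f1(2) f2(2) f3(2) f4(2) R by auto
  qed
  then show ?thesis using f1(1) f2(1) f3(1) f4(1) by blast
qed


end
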